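(* For any $h\in BV([0,1];\mathbb R^d)$ and $g\in D([0,1];\mathbb R^d)$, $$\int_0^1|g(s)-h(s)|ds\le 2d(\operatorname{Var}(h)-|h(0)|+1)\rho_2(g,h)+\pi d\,\rho_2^2(g,h)$$ and $$\int_0^1|g(s)-h(s)|ds\le 2d(\operatorname{Var}(h)+1)\rho_2'(g,h)+\pi d\,(\rho_2')^2(g,h).$$
   Context: $D([0,1];\mathbb R^d)$ is the set of càdlàg functions $[0,1]\to\mathbb R^d$; $|\cdot|$ is the Euclidean norm. For $h\in D$ and finite $\mathbf t\subset(0,1]$, $h^{\mathbf t}$ is the continuous function linear between consecutive points of $\mathbf t\cup\{0,1\}$ with $h^{\mathbf t}(0)=0$, $h^{\mathbf t}(s)=h(s)$ for $s\in\mathbf t\cup\{1\}$; $\operatorname{Var}(h):=\sup_{\mathbf t}\int_0^1|(h^{\mathbf t})'|ds$ over finite $\mathbf t\subset(0,1]$, and $BV=\{h\in D:\operatorname{Var}(h)<\infty\}$. Completed graph: $\Gamma h:=\{(t,x)\in[0,1]\times\mathbb R^d: x\in[h(t-),h(t)]\}$ with the convention $h(0-):=h(0)$ ($[a,b]$ the line segment); modified completed graph $\Gamma'h$: the same but with the convention $h(0-):=0$ (so $\Gamma'h=\Gamma h\cup(\{0\}\times[0,h(0)])$). $\rho_2(g,h)$ is the Hausdorff distance between $\Gamma g$ and $\Gamma h$ in $\mathbb R^{d+1}$, and $\rho_2'(g,h)$ is the Hausdorff distance between $\Gamma'g$ and $\Gamma'h$. *)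

theory Defs
  imports "HOL-Analysis.Analysis"
begin

text \<open>Functions [0,1] -> R^d are modelled as real => real^'d; only values on [0,1] matter.\<close>

definition cadlag :: "(real \<Rightarrow> real^'d) \<Rightarrow> bool" where
  "cadlag h \<longleftrightarrow>
     (\<forall>t\<in>{0..<1}. (h \<longlongrightarrow> h t) (at_right t)) \<and>
     (\<forall>t\<in>{0<..1}. \<exists>l. (h \<longlongrightarrow> l) (at_left t))"

definition lefts :: "(real \<Rightarrow> real^'d) \<Rightarrow> real \<Rightarrow> real^'d" where
  "lefts h t = (if t = 0 then h 0 else Lim (at_left t) h)"

definition lefts' :: "(real \<Rightarrow> real^'d) \<Rightarrow> real \<Rightarrow> real^'d" where
  "lefts' h t = (if t = 0 then 0 else Lim (at_left t) h)"

text \<open>Completed graph and modified completed graph, as subsets of R x R^d (Euclidean norm on pairs).\<close>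
definition cgraph :: "(real \<Rightarrow> real^'d) \<Rightarrow> ((real \<times> (real^'d)) set)" where
  "cgraph h = {(t, x). t \<in> {0..1} \<and> x \<in> closed_segment (lefts h t) (h t)}"

definition cgraph' :: "(real \<Rightarrow> real^'d) \<Rightarrow> ((real \<times> (real^'d)) set)" where
  "cgraph' h = {(t, x). t \<in> {0..1} \<and> x \<in> closed_segment (lefts' h t) (h t)}"

text \<open>Hausdorff distance between (nonempty, bounded) subsets of a metric space.\<close>
definition hausdist :: "'a::metric_space set \<Rightarrow> 'a set \<Rightarrow> real" where
  "hausdist S T = max (SUP x\<in>S. infdist x T) (SUP y\<in>T. infdist y S)"

definition rho2 :: "(real \<Rightarrow> real^'d) \<Rightarrow> (real \<Rightarrow> real^'d) \<Rightarrow> real" where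
  "rho2 g h = hausdist (cgraph g) (cgraph h)"

definition rho2' :: "(real \<Rightarrow> real^'d) \<Rightarrow> (real \<Rightarrow> real^'d) \<Rightarrow> real" where
  "rho2' g h = hausdist (cgraph' g) (cgraph' h)"

text \<open>The piecewise linear interpolant h^t: linear between consecutive points of
  t \<union> {0,1}, h^t(0) = 0, h^t(s) = h(s) for s in t \<union> {1}; constant outside [0,1].\<close>
definition interp_pts :: "real set \<Rightarrow> real list" where
  "interp_pts T = 0 # sorted_list_of_set (insert 1 T)"

definition interp_val :: "(real \<Rightarrow> real^'d) \<Rightarrow> real set \<Rightarrow> nat \<Rightarrow> real^'d" where
  "interp_val h T i = (if i = 0 then 0 else h (interp_pts T ! i))"

definition interp :: "(real \<Rightarrow> real^'d) \<Rightarrow> real set \<Rightarrow> real \<Rightarrow> real^'d" where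
  "interp h T s =
     (let p = interp_pts T; n = length p in
      if s \<le> 0 then 0
      else if s \<ge> 1 then h 1
      else (let i = (LEAST i. Suc i < n \<and> s \<le> p ! Suc i) in
            interp_val h T i + ((s - p ! i) / (p ! Suc i - p ! i)) *\<^sub>R
                                (interp_val h T (Suc i) - interp_val h T i)))"

definition var_set :: "(real \<Rightarrow> real^'d) \<Rightarrow> real set" where
  "var_set h = {integral {0..1} (\<lambda>s. norm (vector_derivative (interp h T) (at s)))
                 | T. finite T \<and> T \<subseteq> {0<..1}}"

definition BV :: "(real \<Rightarrow> real^'d) \<Rightarrow> bool" where
  "BV h \<longleftrightarrow> cadlag h \<and> bdd_above (var_set h)"

definition Var :: "(real \<Rightarrow> real^'d) \<Rightarrow> real" where
  "Var h = Sup (var_set h)"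

end

theory Submission
  imports Defs
begin


fun cs :: "(real \<Rightarrow> real^'d) \<Rightarrow> real list \<Rightarrow> real" where
  "cs h (x # y # xs) = norm (h y - h x) + cs h (y # xs)"
| "cs h _ = 0"

lemma cs_nonneg: "0 \<le> cs h xs"
  by (induction h xs rule: cs.induct) auto

lemma cs_insort: "cs h xs \<le> cs h (insort x xs)"
proof (induction xs)
  case Nil then show ?case by simp
next
  case (Cons y ys)
  show ?case
  proof (cases "x \<le> y")
    case True
    have "insort x (y # ys) = x # y # ys" using True by simp
    then show ?thesis using cs_nonneg[of h "y#ys"] by simp
  next
    case False
    then have ins: "insort x (y # ys) = y # insort x ys" by simp
    show ?thesis
    proof (cases ys)
      case Nil then show ?thesis using ins by simp
    next
      case (Cons z zs)
      show ?thesis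
      proof (cases "x \<le> z")
        case True
        have tri: "norm (h z - h y) \<le> norm (h x - h y) + norm (h z - h x)"
          using norm_triangle_ineq[of "h x - h y" "h z - h x"] by simp
        have "insort x ys = x # z # zs" using True Cons by simp
        then have "cs h (insort x (y # ys)) = norm (h x - h y) + (norm (h z - h x) + cs h (z # zs))"
          using ins by simp
        moreover have "cs h (y # ys) = norm (h z - h y) + cs h (z # zs)" using Cons by simp
        ultimately show ?thesis using tri by linarith
      next
        case False2: False
        have i2: "insort x ys = z # insort x zs" using False2 Cons by simp
        have "cs h (z # zs) \<le> cs h (z # insort x zs)" using Cons.IH Cons i2 by simp
        moreover have "cs h (insort x (y # ys)) = norm (h z - h y) + cs h (z # insort x zs)"
          using ins i2 by simp
        moreover have "cs h (y # ys) = norm (h z - h y) + cs h (z # zs)" using Cons by simp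
        ultimately show ?thesis by linarith
      qed
    qed
  qed
qed

lemma cs_sl_mono_aux: "finite C \<Longrightarrow> finite A \<Longrightarrow> cs h (sorted_list_of_set A) \<le> cs h (sorted_list_of_set (A \<union> C))"
proof (induction C rule: finite_induct)
  case empty then show ?case by simp
next
  case (insert x F)
  show ?case
  proof (cases "x \<in> A \<union> F")
    case True
    then have "A \<union> insert x F = A \<union> F" by auto
    then show ?thesis using insert by simp
  next
    case False
    have "A \<union> insert x F = insert x (A \<union> F)" by auto
    then have "sorted_list_of_set (A \<union> insert x F) = insort x (sorted_list_of_set (A \<union> F))"
      using False insert.prems insert.hyps by (simp add: sorted_list_of_set_insert)
    then show ?thesis using insert cs_insort[of h "sorted_list_of_set (A \<union> F)" x] by simp
  qed
qed

lemma cs_sl_mono: "finite B \<Longrightarrow> A \<subseteq> B \<Longrightarrow> cs h (sorted_list_of_set A) \<le> cs h (sorted_list_of_set B)"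
  using cs_sl_mono_aux[of B A h] by (metis Un_absorb1 finite_subset)

lemma cs_remdups_adj: "cs h (remdups_adj xs) = cs h xs"
proof (induction xs rule: remdups_adj.induct)
  case (3 x y xs)
  show ?case
  proof (cases "x = y")
    case True then show ?thesis using 3 by simp
  next
    case False
    have "remdups_adj (y # xs) = y # tl (remdups_adj (y # xs))" by simp
    then have "cs h (x # remdups_adj (y # xs)) = norm (h y - h x) + cs h (remdups_adj (y # xs))"
      by (metis cs.simps(1))
    then show ?thesis using 3 False by simp
  qed
qed auto

lemma distinct_remdups_adj_sorted: "sorted xs \<Longrightarrow> distinct (remdups_adj xs)"
proof (induction xs rule: remdups_adj.induct)
  case (3 x y xs)
  show ?case
  proof (cases "x = y")
    case True then show ?thesis using 3 by simp
  next
    case False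
    then have "x < y" using 3(3) by auto
    moreover have "\<forall>z\<in>set (y#xs). y \<le> z" using 3(3) by auto
    ultimately have "x \<notin> set (y # xs)" by (meson leD)
    then have "x \<notin> set (remdups_adj (y # xs))" by simp
    moreover have "distinct (remdups_adj (y # xs))" using 3(2) False 3(3) by simp
    moreover have "remdups_adj (x # y # xs) = x # remdups_adj (y # xs)" using False by simp
    ultimately show ?thesis by simp
  qed
qed auto

lemma cs_sorted_le: "sorted xs \<Longrightarrow> finite S \<Longrightarrow> set xs \<subseteq> S \<Longrightarrow> cs h xs \<le> cs h (sorted_list_of_set S)"
proof -
  assume a: "sorted xs" "finite S" "set xs \<subseteq> S"
  have "remdups_adj xs = sorted_list_of_set (set xs)"
    by (rule sorted_distinct_set_unique) (simp_all add: a(1) distinct_remdups_adj_sorted)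
  then have "cs h xs = cs h (sorted_list_of_set (set xs))" by (metis cs_remdups_adj)
  then show ?thesis using cs_sl_mono[OF a(2) a(3)] by simp
qed

lemma cs_append: "cs h xs + cs h ys \<le> cs h (xs @ ys)"
proof (induction h xs rule: cs.induct)
  case (1 h x y xs) then show ?case by simp
next
  case ("2_1" h) then show ?case by simp
next
  case ("2_2" h x)
  show ?case
  proof (cases ys)
    case Nil then show ?thesis by simp
  next
    case (Cons z zs) then show ?thesis by (simp add: cs_nonneg)
  qed
qed



lemma cs_sum: "cs h L = (\<Sum>j<length L - 1. norm (h (L ! Suc j) - h (L ! j)))"
proof (induction h L rule: cs.induct)
  case (1 h x y xs)
  have "length (x # y # xs) - 1 = Suc (length (y # xs) - 1)" by simp
  then show ?case using 1 by (simp only: sum.lessThan_Suc_shift) simp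
qed auto

lemma interp_pts_props:
  fixes T :: "real set"
  assumes T: "finite T" "T \<subseteq> {0<..1}"
  defines "p \<equiv> interp_pts T"
  shows "sorted_wrt (<) p" "p ! 0 = 0" "length p \<ge> 2" "p ! (length p - 1) = 1"
    "p = 0 # sorted_list_of_set (insert 1 T)"
proof -
  let ?L = "sorted_list_of_set (insert 1 T)"
  have fin: "finite (insert 1 T)" using T by simp
  have sl: "sorted_wrt (<) ?L" by simp
  have setL: "set ?L = insert 1 T" by (rule set_sorted_list_of_set[OF fin])
  have pos: "\<forall>x\<in>set ?L. 0 < x" unfolding setL using T by auto
  show pdef: "p = 0 # ?L" by (simp add: p_def interp_pts_def)
  show "sorted_wrt (<) p" using sl pos pdef by simp
  show "p ! 0 = 0" using pdef by simp
  have ne: "?L \<noteq> []" using fin by simp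
  then show "length p \<ge> 2" using pdef by (cases ?L) auto
  have "last ?L = Max (insert 1 T)"
  proof -
    have "sorted ?L" by simp
    have "last ?L \<in> insert 1 T" using ne fin by (metis last_in_set set_sorted_list_of_set)
    moreover have "\<forall>x\<in>insert 1 T. x \<le> last ?L"
      using \<open>sorted ?L\<close> ne fin by (metis in_set_conv_nth last_conv_nth sorted_nth_mono le_eq_less_or_eq
          diff_Suc_less length_greater_0_conv Suc_pred' less_Suc_eq_le set_sorted_list_of_set)
    ultimately show ?thesis using fin by (metis Max_eqI)
  qed
  moreover have "Max (insert 1 T) = 1" using T fin by (intro Max_eqI) auto
  ultimately have "last ?L = 1" by simp
  moreover have "last p = last ?L" using pdef ne by simp
  moreover have "p ! (length p - 1) = last p" by (rule last_conv_nth[symmetric]) (simp add: pdef)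
  ultimately show "p ! (length p - 1) = 1" by simp
qed



lemma pts_mono:
  assumes "sorted_wrt (<) (p::real list)" "j \<le> k" "k < length p"
  shows "p ! j \<le> p ! k"
  using assms sorted_wrt_nth_less[of "(<)" p j k] by (cases "j = k") auto

lemma interp_piece:
  fixes T :: "real set"
  assumes T: "finite T" "T \<subseteq> {0<..1}"
    and i: "Suc i < length (interp_pts T)"
    and s: "interp_pts T ! i < s" "s < interp_pts T ! Suc i"
  shows "interp h T s = interp_val h T i + ((s - interp_pts T ! i) / (interp_pts T ! Suc i - interp_pts T ! i)) *\<^sub>R
                                (interp_val h T (Suc i) - interp_val h T i)"
proof -
  let ?p = "interp_pts T"
  let ?n = "length ?p"
  note pp = interp_pts_props[OF T]
  have "?p ! 0 \<le> ?p ! i" using pts_mono[OF pp(1), of 0 i] i by simp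
  then have s0: "0 < s" using pp(2) s by simp
  have "?p ! Suc i \<le> ?p ! (?n - 1)" using pts_mono[OF pp(1), of "Suc i" "?n - 1"] i by simp
  then have s1: "s < 1" using pp(4) s by simp
  have le: "(LEAST j. Suc j < ?n \<and> s \<le> ?p ! Suc j) = i"
  proof (rule Least_equality)
    show "Suc i < ?n \<and> s \<le> ?p ! Suc i" using i s by simp
  next
    fix j assume j: "Suc j < ?n \<and> s \<le> ?p ! Suc j"
    show "i \<le> j"
    proof (rule ccontr)
      assume "\<not> i \<le> j"
      then have "Suc j \<le> i" by simp
      then have "?p ! Suc j \<le> ?p ! i" using pts_mono[OF pp(1), of "Suc j" i] i by simp
      then show False using j s by simp
    qed
  qed
  show ?thesis unfolding interp_def Let_def using s0 s1 le by simp
qed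

lemma interp_deriv_piece:
  fixes T :: "real set"
  assumes T: "finite T" "T \<subseteq> {0<..1}"
    and i: "Suc i < length (interp_pts T)"
    and s: "interp_pts T ! i < s" "s < interp_pts T ! Suc i"
  shows "norm (vector_derivative (interp h T) (at s)) =
     norm (interp_val h T (Suc i) - interp_val h T i) / (interp_pts T ! Suc i - interp_pts T ! i)"
proof -
  let ?a = "interp_pts T ! i" and ?b = "interp_pts T ! Suc i"
  let ?u = "interp_val h T i" and ?w = "interp_val h T (Suc i)"
  have ab: "?a < ?b" using s by simp
  define f where "f = (\<lambda>s. ?u + ((s - ?a) / (?b - ?a)) *\<^sub>R (?w - ?u))"
  have fd: "(f has_vector_derivative ((1 / (?b - ?a)) *\<^sub>R (?w - ?u))) (at s)"
    unfolding f_def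
    using ab by (auto intro!: derivative_eq_intros simp: divide_simps)
  have "(interp h T has_vector_derivative ((1 / (?b - ?a)) *\<^sub>R (?w - ?u))) (at s)"
  proof (rule has_vector_derivative_transform_within_open[OF fd, of "{?a<..<?b}"])
    show "open {?a<..<?b}" by simp
    show "s \<in> {?a<..<?b}" using s by simp
    fix y assume "y \<in> {?a<..<?b}"
    then show "f y = interp h T y" unfolding f_def using interp_piece[OF T i, of y h] by simp
  qed
  then have "vector_derivative (interp h T) (at s) = (1 / (?b - ?a)) *\<^sub>R (?w - ?u)"
    by (rule vector_derivative_at)
  then show ?thesis using ab by simp
qed



lemma interp_integral_upto:
  fixes T :: "real set"
  assumes T: "finite T" "T \<subseteq> {0<..1}"
  shows "k < length (interp_pts T) \<Longrightarrow>
    ((\<lambda>s. norm (vector_derivative (interp h T) (at s))) has_integral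
      (\<Sum>i<k. norm (interp_val h T (Suc i) - interp_val h T i))) {0..interp_pts T ! k}"
proof (induction k)
  case 0
  then show ?case using interp_pts_props(2)[OF T] by (simp add: has_integral_refl)
next
  case (Suc k)
  let ?p = "interp_pts T"
  let ?F = "\<lambda>s. norm (vector_derivative (interp h T) (at s))"
  let ?c = "norm (interp_val h T (Suc k) - interp_val h T k)"
  note pp = interp_pts_props[OF T]
  have ab: "?p ! k < ?p ! Suc k" using sorted_wrt_nth_less[OF pp(1), of k "Suc k"] Suc.prems by simp
  have piece: "(?F has_integral ?c) {?p ! k..?p ! Suc k}"
  proof (rule has_integral_spike_finite[of "{?p ! k, ?p ! Suc k}"])
    show "finite {?p ! k, ?p ! Suc k}" by simp
    fix x assume "x \<in> {?p ! k..?p ! Suc k} - {?p ! k, ?p ! Suc k}"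
    then have "?p ! k < x" "x < ?p ! Suc k" by auto
    then show "?F x = ?c / (?p ! Suc k - ?p ! k)"
      by (rule interp_deriv_piece[OF T Suc.prems])
  next
    show "((\<lambda>x. ?c / (?p ! Suc k - ?p ! k)) has_integral ?c) {?p ! k..?p ! Suc k}"
      using has_integral_const_real[of "?c / (?p ! Suc k - ?p ! k)" "?p ! k" "?p ! Suc k"] ab
      by simp
  qed
  have p0: "0 \<le> ?p ! k" using pts_mono[OF pp(1), of 0 k] Suc.prems pp(2) by simp
  have "(?F has_integral ((\<Sum>i<k. norm (interp_val h T (Suc i) - interp_val h T i)) + ?c)) {0..?p ! Suc k}"
    by (rule has_integral_combine[OF p0 less_imp_le[OF ab]]) (use Suc piece in auto)
  then show ?case by simp
qed

lemma interp_integral: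
  fixes T :: "real set"
  assumes T: "finite T" "T \<subseteq> {0<..1}"
  shows "integral {0..1} (\<lambda>s. norm (vector_derivative (interp h T) (at s)))
     = norm (h (hd (sorted_list_of_set (insert 1 T)))) + cs h (sorted_list_of_set (insert 1 T))"
proof -
  let ?L = "sorted_list_of_set (insert 1 T)"
  let ?p = "interp_pts T"
  note pp = interp_pts_props[OF T]
  have n: "length ?p - 1 < length ?p" using pp(3) by simp
  have "integral {0..1} (\<lambda>s. norm (vector_derivative (interp h T) (at s))) =
      (\<Sum>i<length ?p - 1. norm (interp_val h T (Suc i) - interp_val h T i))"
    using interp_integral_upto[OF T n, of h] pp(4) by (simp add: integral_unique)
  also have "length ?p - 1 = Suc (length ?L - 1)" using pp(3) pp(5) by simp
  also have "(\<Sum>i<Suc (length ?L - 1). norm (interp_val h T (Suc i) - interp_val h T i))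
     = norm (interp_val h T (Suc 0) - interp_val h T 0) +
       (\<Sum>i<length ?L - 1. norm (interp_val h T (Suc (Suc i)) - interp_val h T (Suc i)))"
    by (rule sum.lessThan_Suc_shift)
  also have "\<dots> = norm (h (hd ?L)) + cs h ?L"
  proof -
    have ne: "?L \<noteq> []" using T by simp
    have "interp_val h T (Suc j) = h (?L ! j)" for j
      unfolding interp_val_def using pp(5) by simp
    moreover have "interp_val h T 0 = 0" unfolding interp_val_def by simp
    moreover have "hd ?L = ?L ! 0" using ne by (simp add: hd_conv_nth)
    ultimately show ?thesis by (simp add: cs_sum)
  qed
  finally show ?thesis .
qed



lemma Var_ge:
  assumes "BV h" "finite T" "T \<subseteq> {0<..1}"
  shows "norm (h (hd (sorted_list_of_set (insert 1 T)))) + cs h (sorted_list_of_set (insert 1 T)) \<le> Var h"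
proof -
  have "integral {0..1} (\<lambda>s. norm (vector_derivative (interp h T) (at s))) \<in> var_set h"
    unfolding var_set_def using assms(2,3) by blast
  then have "integral {0..1} (\<lambda>s. norm (vector_derivative (interp h T) (at s))) \<le> Var h"
    unfolding Var_def using assms(1) unfolding BV_def by (intro cSup_upper) auto
  then show ?thesis using interp_integral[OF assms(2,3), of h] by simp
qed

lemma cadlag_local_bound:
  fixes h :: "real \<Rightarrow> real^'d"
  assumes "cadlag h" "t \<in> {0..1}"
  shows "\<exists>d>0. \<exists>B. \<forall>s\<in>{0..1}. \<bar>s - t\<bar> < d \<longrightarrow> norm (h s) \<le> B"
proof -
  have R: "\<exists>b>t. \<forall>s. t < s \<and> s < b \<and> s \<le> 1 \<longrightarrow> norm (h s) \<le> norm (h t) + 1"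
  proof (cases "t < 1")
    case True
    then have "(h \<longlongrightarrow> h t) (at_right t)" using assms unfolding cadlag_def by auto
    then have "eventually (\<lambda>s. dist (h s) (h t) < 1) (at_right t)"
      by (simp add: tendsto_iff)
    then obtain b where b: "b > t" "\<forall>y>t. y < b \<longrightarrow> dist (h y) (h t) < 1"
      unfolding eventually_at_right_field by blast
    have "norm (h s) \<le> norm (h t) + 1" if "t < s" "s < b" for s
    proof -
      have "dist (h s) (h t) < 1" using b that by blast
      then show ?thesis by (metis dist_norm norm_triangle_sub add.commute add_le_cancel_left less_imp_le order_trans)
    qed
    then show ?thesis using b(1) by blast
  next
    case False
    then show ?thesis by (intro exI[of _ "t+1"]) auto
  qed
  have L: "\<exists>a<t. \<exists>B. \<forall>s. a < s \<and> s < t \<and> 0 \<le> s \<longrightarrow> norm (h s) \<le> B"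
  proof (cases "0 < t")
    case True
    have "t \<in> {0<..1}" using assms(2) True by auto
    then obtain l where "(h \<longlongrightarrow> l) (at_left t)" using assms(1) unfolding cadlag_def by blast
    then have "eventually (\<lambda>s. dist (h s) l < 1) (at_left t)"
      by (simp add: tendsto_iff)
    then obtain a where a: "a < t" "\<forall>y>a. y < t \<longrightarrow> dist (h y) l < 1"
      unfolding eventually_at_left_field by blast
    have "norm (h s) \<le> norm l + 1" if "a < s" "s < t" for s
    proof -
      have "dist (h s) l < 1" using a that by blast
      then show ?thesis by (metis dist_norm norm_triangle_sub add.commute add_le_cancel_left less_imp_le order_trans)
    qed
    then show ?thesis using a(1) by blast
  next
    case False
    then show ?thesis by (intro exI[of _ "t - 1"]) auto
  qed
  obtain b where b: "b > t" "\<forall>s. t < s \<and> s < b \<and> s \<le> 1 \<longrightarrow> norm (h s) \<le> norm (h t) + 1" using R by blast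
  obtain a B where a: "a < t" "\<forall>s. a < s \<and> s < t \<and> 0 \<le> s \<longrightarrow> norm (h s) \<le> B" using L by blast
  show ?thesis
  proof (intro exI conjI allI ballI impI)
    show "0 < min (b - t) (t - a)" using a b by simp
    fix s :: real assume s: "s \<in> {0..1}" "\<bar>s - t\<bar> < min (b - t) (t - a)"
    show "norm (h s) \<le> max B (norm (h t) + 1)"
    proof (cases "s < t")
      case True then show ?thesis using a s by (simp add: abs_if) (smt (verit))
    next
      case False
      show ?thesis
      proof (cases "s = t")
        case True then show ?thesis by simp
      next
        case False2: False
        then show ?thesis using False b s by (simp add: abs_if) (smt (verit))
      qed
    qed
  qed
qed

lemma cadlag_bounded:
  fixes h :: "real \<Rightarrow> real^'d"
  assumes "cadlag h"
  shows "\<exists>B. \<forall>t\<in>{0..1}. norm (h t) \<le> B"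
proof -
  have "\<forall>t\<in>{0..1::real}. \<exists>d>0. \<exists>B. \<forall>s\<in>{0..1}. \<bar>s - t\<bar> < d \<longrightarrow> norm (h s) \<le> B"
    using cadlag_local_bound[OF assms] by blast
  then obtain d Bf where dB: "\<forall>t\<in>{0..1::real}. d t > 0 \<and> (\<forall>s\<in>{0..1}. \<bar>s - t\<bar> < d t \<longrightarrow> norm (h s) \<le> Bf t)"
    by metis
  have "{0..1::real} \<subseteq> (\<Union>t\<in>{0..1}. ball t (d t))"
    using dB by force
  then obtain C where C: "C \<subseteq> {0..1}" "finite C" "{0..1::real} \<subseteq> (\<Union>t\<in>C. ball t (d t))"
    using compactE_image[where S="{0..1::real}" and C="{0..1}" and f="\<lambda>t. ball t (d t)"] by auto
  show ?thesis
  proof (intro exI ballI)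
    fix s :: real assume s: "s \<in> {0..1}"
    then obtain t where t: "t \<in> C" "s \<in> ball t (d t)" using C by blast
    then have "norm (h s) \<le> Bf t" using dB C s by (auto simp: dist_real_def abs_minus_commute)
    also have "Bf t \<le> Max (Bf ` C)" using t C by simp
    finally show "norm (h s) \<le> Max (Bf ` C)" .
  qed
qed



definition osc :: "(real \<Rightarrow> real^'d) \<Rightarrow> real set \<Rightarrow> real" where
  "osc h S = (SUP pq \<in> S \<times> S. norm (h (fst pq) - h (snd pq)))"

definition cell :: "nat \<Rightarrow> nat \<Rightarrow> real set" where
  "cell N l = {real l / real N .. real (Suc l) / real N}"

lemma cell_sub: "l < N \<Longrightarrow> cell N l \<subseteq> {0..1}"
  unfolding cell_def by (auto simp: divide_simps)

lemma cell_ne: "N > 0 \<Longrightarrow> cell N l \<noteq> {}"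
  unfolding cell_def by (auto simp: divide_simps)

lemma osc_bdd:
  fixes h :: "real \<Rightarrow> real^'d"
  assumes B: "\<forall>t\<in>{0..1}. norm (h t) \<le> B" and S: "S \<subseteq> {0..1}"
  shows "bdd_above ((\<lambda>pq. norm (h (fst pq) - h (snd pq))) ` (S \<times> S))"
proof (rule bdd_aboveI2)
  fix pq assume "pq \<in> S \<times> S"
  then have "norm (h (fst pq)) \<le> B" "norm (h (snd pq)) \<le> B" using B S by auto
  then show "norm (h (fst pq) - h (snd pq)) \<le> 2 * B"
    using norm_triangle_ineq4[of "h (fst pq)" "h (snd pq)"] by simp
qed

lemma osc_ge:
  fixes h :: "real \<Rightarrow> real^'d"
  assumes B: "\<forall>t\<in>{0..1}. norm (h t) \<le> B" and S: "S \<subseteq> {0..1}" and pq: "p \<in> S" "q \<in> S"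
  shows "norm (h p - h q) \<le> osc h S"
  unfolding osc_def using cSUP_upper[OF _ osc_bdd[OF B S], of "(p,q)"] pq by simp

lemma osc_nonneg:
  fixes h :: "real \<Rightarrow> real^'d"
  assumes B: "\<forall>t\<in>{0..1}. norm (h t) \<le> B" and S: "S \<subseteq> {0..1}" "S \<noteq> {}"
  shows "0 \<le> osc h S"
proof -
  obtain p where "p \<in> S" using S by blast
  then show ?thesis using osc_ge[OF B S(1), of p p] by simp
qed

lemma osc_near:
  fixes h :: "real \<Rightarrow> real^'d"
  assumes B: "\<forall>t\<in>{0..1}. norm (h t) \<le> B" and S: "S \<subseteq> {0..1}" "S \<noteq> {}" and e: "e > 0"
  shows "\<exists>p q. p \<in> S \<and> q \<in> S \<and> osc h S - e < norm (h p - h q)"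
proof -
  have "osc h S - e < osc h S" using e by simp
  then have "\<exists>pq\<in>S \<times> S. osc h S - e < norm (h (fst pq) - h (snd pq))"
  proof -
    have ne: "S \<times> S \<noteq> {}" using S(2) by simp
    show ?thesis using \<open>osc h S - e < osc h S\<close> less_cSUP_iff[OF ne osc_bdd[OF B S(1)], of "osc h S - e"]
      unfolding osc_def by blast
  qed
  then show ?thesis by auto
qed



fun pairs_list :: "(nat \<Rightarrow> real) \<Rightarrow> (nat \<Rightarrow> real) \<Rightarrow> nat \<Rightarrow> real list" where
  "pairs_list a b 0 = []"
| "pairs_list a b (Suc n) = pairs_list a b n @ [a n, b n]"

lemma pl_cs: "(\<Sum>l<n. norm (h (b l) - h (a l))) \<le> cs h (pairs_list a b n)"
proof (induction n)
  case 0 then show ?case by simp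
next
  case (Suc n)
  have "cs h (pairs_list a b n) + cs h [a n, b n] \<le> cs h (pairs_list a b (Suc n))"
    using cs_append[of h "pairs_list a b n" "[a n, b n]"] by simp
  then show ?case using Suc by simp
qed

lemma pl_set: "set (pairs_list a b n) = a ` {..<n} \<union> b ` {..<n}"
  by (induction n) (auto simp: lessThan_Suc)

lemma pl_sorted:
  assumes "N > 0" "\<forall>l<n. a l \<le> b l \<and> real l / real N \<le> a l \<and> b l \<le> real (Suc l) / real N"
  shows "sorted (pairs_list a b n) \<and> (\<forall>x\<in>set (pairs_list a b n). x \<le> real n / real N)"
  using assms(2)
proof (induction n)
  case 0 then show ?case by simp
next
  case (Suc n)
  then have IH: "sorted (pairs_list a b n)" "\<forall>x\<in>set (pairs_list a b n). x \<le> real n / real N" by auto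
  have ab: "a n \<le> b n" "real n / real N \<le> a n" "b n \<le> real (Suc n) / real N" using Suc.prems by auto
  have "real n / real N \<le> real (Suc n) / real N" using assms(1) by (simp add: divide_right_mono)
  then have "\<forall>x\<in>set (pairs_list a b n). x \<le> real (Suc n) / real N" using IH(2) by force
  moreover have "sorted (pairs_list a b (Suc n))"
    using IH ab by (auto simp: sorted_append)
  ultimately show ?case using ab by auto
qed



lemma VarE:
  fixes h :: "real \<Rightarrow> real^'d"
  assumes BV: "BV h" and N: "N > 0"
  shows "(\<Sum>l<N. osc h (cell N l)) \<le> Var h - norm (h 0)"
proof (rule field_le_epsilon)
  fix \<epsilon> :: real assume \<epsilon>: "0 < \<epsilon>"
  have cad: "cadlag h" using BV unfolding BV_def by simp
  obtain B where B: "\<forall>t\<in>{0..1}. norm (h t) \<le> B" using cadlag_bounded[OF cad] by blast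
  define \<delta> where "\<delta> = \<epsilon> / (4 * real N)"
  have \<delta>: "\<delta> > 0" using \<epsilon> N by (simp add: \<delta>_def)
  have "\<forall>l. \<exists>pq. l < N \<longrightarrow> fst pq \<in> cell N l \<and> snd pq \<in> cell N l \<and>
          osc h (cell N l) - \<delta> < norm (h (fst pq) - h (snd pq))"
  proof
    fix l show "\<exists>pq. l < N \<longrightarrow> fst pq \<in> cell N l \<and> snd pq \<in> cell N l \<and>
          osc h (cell N l) - \<delta> < norm (h (fst pq) - h (snd pq))"
    proof (cases "l < N")
      case True
      then obtain p q where "p \<in> cell N l" "q \<in> cell N l" "osc h (cell N l) - \<delta> < norm (h p - h q)"
        using osc_near[OF B cell_sub[OF True] cell_ne[OF N] \<delta>] by blast
      then show ?thesis by (intro exI[of _ "(p,q)"]) simp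
    qed simp
  qed
  then obtain PQ where PQ: "\<forall>l. l < N \<longrightarrow> fst (PQ l) \<in> cell N l \<and> snd (PQ l) \<in> cell N l \<and>
          osc h (cell N l) - \<delta> < norm (h (fst (PQ l)) - h (snd (PQ l)))" by metis
  define p where "p = (\<lambda>l. fst (PQ l))"
  define q where "q = (\<lambda>l. snd (PQ l))"
  have pq: "\<And>l. l < N \<Longrightarrow> p l \<in> cell N l \<and> q l \<in> cell N l \<and> osc h (cell N l) - \<delta> < norm (h (p l) - h (q l))"
    using PQ unfolding p_def q_def by blast
  have "(h \<longlongrightarrow> h 0) (at_right 0)" using cad unfolding cadlag_def by simp
  then have "eventually (\<lambda>s. dist (h s) (h 0) < \<delta>) (at_right 0)" using \<delta> by (simp add: tendsto_iff)
  then obtain b where b: "b > 0" "\<forall>y>0. y < b \<longrightarrow> dist (h y) (h 0) < \<delta>"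
    unfolding eventually_at_right_field by auto
  define Pos where "Pos = insert (1 / real N) {x \<in> p ` {..<N} \<union> q ` {..<N}. x > 0}"
  have Posf: "finite Pos" "Pos \<noteq> {}" unfolding Pos_def by auto
  have Pospos: "\<forall>x\<in>Pos. x > 0" unfolding Pos_def using N by auto
  define m where "m = Min Pos"
  have m: "m > 0" using Posf Pospos unfolding m_def by auto
  have mle: "\<And>x. x \<in> Pos \<Longrightarrow> m \<le> x" unfolding m_def using Posf by simp
  define t1 where "t1 = min (b / 2) (m / 2)"
  have t1: "0 < t1" "t1 < b" "t1 < m" using b m unfolding t1_def by auto
  have t1N: "t1 < 1 / real N" using t1 mle[of "1 / real N"] unfolding Pos_def by simp
  have t1le1: "t1 \<le> 1" using t1N N by (smt (verit) divide_le_eq_1 of_nat_0_less_iff of_nat_1 of_nat_le_iff less_one not_less)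
  have h01: "norm (h t1 - h 0) < \<delta>" using b t1 by (simp add: dist_norm)
  define p' where "p' = (\<lambda>l. if p l = 0 then t1 else p l)"
  define q' where "q' = (\<lambda>l. if q l = 0 then t1 else q l)"
  have cellpos: "\<And>x l. l < N \<Longrightarrow> x \<in> cell N l \<Longrightarrow> x = 0 \<Longrightarrow> l = 0"
    unfolding cell_def using N by (auto simp: divide_simps)
  have cell0: "t1 \<in> cell N 0" unfolding cell_def using t1 t1N by simp
  have mod: "\<And>x l. l < N \<Longrightarrow> x \<in> cell N l \<Longrightarrow> x \<in> p ` {..<N} \<union> q ` {..<N} \<Longrightarrow>
      (if x = 0 then t1 else x) \<in> cell N l \<and> 0 < (if x = 0 then t1 else x) \<and> (if x = 0 then t1 else x) \<le> 1
      \<and> t1 \<le> (if x = 0 then t1 else x) \<and> norm (h (if x = 0 then t1 else x) - h x) < \<delta>"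
  proof -
    fix x l assume l: "l < N" and x: "x \<in> cell N l" and xP: "x \<in> p ` {..<N} \<union> q ` {..<N}"
    show "(if x = 0 then t1 else x) \<in> cell N l \<and> 0 < (if x = 0 then t1 else x) \<and> (if x = 0 then t1 else x) \<le> 1
      \<and> t1 \<le> (if x = 0 then t1 else x) \<and> norm (h (if x = 0 then t1 else x) - h x) < \<delta>"
    proof (cases "x = 0")
      case True
      then have "l = 0" using cellpos l x by blast
      then show ?thesis using True cell0 t1 t1le1 h01 by simp
    next
      case False
      have x01: "x \<in> {0..1}" using cell_sub[OF l] x by blast
      then have "x > 0" using False by simp
      then have "x \<in> Pos" unfolding Pos_def using xP by simp
      then have "m \<le> x" by (rule mle)
      then show ?thesis using False x x01 t1 \<delta> by simp
    qed
  qed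
  have p'm: "\<And>l. l < N \<Longrightarrow> p' l \<in> cell N l \<and> 0 < p' l \<and> p' l \<le> 1 \<and> t1 \<le> p' l \<and> norm (h (p' l) - h (p l)) < \<delta>"
    unfolding p'_def using mod pq by blast
  have q'm: "\<And>l. l < N \<Longrightarrow> q' l \<in> cell N l \<and> 0 < q' l \<and> q' l \<le> 1 \<and> t1 \<le> q' l \<and> norm (h (q' l) - h (q l)) < \<delta>"
    unfolding q'_def using mod pq by blast
  define T where "T = insert t1 (p' ` {..<N} \<union> q' ` {..<N})"
  have Tf: "finite T" unfolding T_def by simp
  have Tsub: "T \<subseteq> {0<..1}" unfolding T_def using t1 t1le1 p'm q'm by auto
  define a where "a = (\<lambda>l. min (p' l) (q' l))"
  define c where "c = (\<lambda>l. max (p' l) (q' l))"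
  have acc: "\<forall>l<N. a l \<le> c l \<and> real l / real N \<le> a l \<and> c l \<le> real (Suc l) / real N"
    using p'm q'm unfolding a_def c_def cell_def by auto
  have srt: "sorted (pairs_list a c N)" using pl_sorted[OF N acc] by blast
  have "set (pairs_list a c N) \<subseteq> insert 1 T"
    unfolding pl_set T_def a_def c_def by (auto simp: min_def max_def)
  moreover have "finite (insert 1 T)" using Tf by simp
  ultimately have cs1: "cs h (pairs_list a c N) \<le> cs h (sorted_list_of_set (insert 1 T))"
    using cs_sorted_le[OF srt] by blast
  have MinT: "Min (insert 1 T) = t1"
    by (rule Min_eqI) (use Tf t1le1 p'm q'm in \<open>auto simp: T_def\<close>)
  have hd: "hd (sorted_list_of_set (insert 1 T)) = t1"
    using sorted_list_of_set_nonempty[of "insert 1 T"] Tf MinT by simp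
  have V: "norm (h t1) + cs h (sorted_list_of_set (insert 1 T)) \<le> Var h"
    using Var_ge[OF BV Tf Tsub] hd by simp
  have terms: "osc h (cell N l) - 3 * \<delta> \<le> norm (h (c l) - h (a l))" if l: "l < N" for l
  proof -
    have "norm (h (c l) - h (a l)) = norm (h (p' l) - h (q' l))"
      unfolding a_def c_def by (cases "p' l \<le> q' l") (auto simp: min_def max_def norm_minus_commute)
    moreover have "norm (h (p l) - h (q l)) \<le> norm (h (p' l) - h (q' l)) + norm (h (p' l) - h (p l)) + norm (h (q' l) - h (q l))"
      using norm_triangle_ineq[of "h (p' l) - h (q' l)" "h (q' l) - h (q l)"]
        norm_triangle_ineq[of "h (p l) - h (p' l)" "h (p' l) - h (q l)"]
      by (simp add: norm_minus_commute)
    ultimately show ?thesis using pq[OF l] p'm[OF l] q'm[OF l] by linarith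
  qed
  have "(\<Sum>l<N. osc h (cell N l) - 3 * \<delta>) \<le> (\<Sum>l<N. norm (h (c l) - h (a l)))"
    by (rule sum_mono) (use terms in simp)
  also have "\<dots> \<le> cs h (pairs_list a c N)" by (rule pl_cs)
  finally have S: "(\<Sum>l<N. osc h (cell N l)) - real N * (3 * \<delta>) \<le> cs h (sorted_list_of_set (insert 1 T))"
    using cs1 by (simp add: sum_subtractf)
  have "norm (h 0) \<le> norm (h t1) + \<delta>" using h01 norm_triangle_ineq2[of "h 0" "h t1"]
    by (simp add: norm_minus_commute)
  moreover have "real N * (3 * \<delta>) + \<delta> \<le> \<epsilon>" unfolding \<delta>_def using N \<epsilon> by (simp add: field_simps)
  ultimately show "(\<Sum>l<N. osc h (cell N l)) \<le> Var h - norm (h 0) + \<epsilon>" using S V by linarith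
qed



definition cidx :: "nat \<Rightarrow> real \<Rightarrow> nat" where
  "cidx N s = (if s \<ge> 1 then N - 1 else nat \<lfloor>s * real N\<rfloor>)"

lemma cidx:
  assumes N: "N > 0" and s: "s \<in> {0..1}"
  shows "cidx N s < N \<and> s \<in> cell N (cidx N s)"
proof (cases "s \<ge> 1")
  case True
  then have "s = 1" using s by simp
  moreover have "real (N - 1) = real N - 1" using N by simp
  ultimately show ?thesis using N True by (simp add: cidx_def cell_def divide_simps)
next
  case False
  have f0: "0 \<le> \<lfloor>s * real N\<rfloor>" using s by simp
  have "\<lfloor>s * real N\<rfloor> < int N"
    using False s N by (simp add: floor_less_iff)
  then have lt: "nat \<lfloor>s * real N\<rfloor> < N" using f0 by linarith
  define c where "c = nat \<lfloor>s * real N\<rfloor>"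
  have ce: "real c = of_int \<lfloor>s * real N\<rfloor>" using f0 unfolding c_def by simp
  have c1: "real c \<le> s * real N" using ce floor_correct[of "s * real N"] by linarith
  have c2: "s * real N \<le> real c + 1" using ce floor_correct[of "s * real N"] by linarith
  have "real c / real N \<le> s" using c1 N by (simp add: divide_simps mult.commute)
  moreover have "s \<le> real (Suc c) / real N" using c2 N by (simp add: divide_simps mult.commute)
  ultimately have "s \<in> cell N c" unfolding cell_def by simp
  moreover have "cidx N s = c" unfolding cidx_def c_def using False by simp
  ultimately show ?thesis using lt c_def by simp
qed

lemma chain:
  fixes h :: "real \<Rightarrow> real^'d"
  assumes B: "\<forall>t\<in>{0..1}. norm (h t) \<le> B" and N: "N > 0"
  shows "i \<le> j \<Longrightarrow> j < N \<Longrightarrow> a \<in> cell N i \<Longrightarrow> b \<in> cell N j \<Longrightarrow>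
     norm (h a - h b) \<le> (\<Sum>l\<in>{i..j}. osc h (cell N l))"
proof (induction j arbitrary: b)
  case 0
  then show ?case using osc_ge[OF B cell_sub[of 0 N]] by simp
next
  case (Suc j)
  show ?case
  proof (cases "i = Suc j")
    case True
    then show ?thesis using Suc.prems osc_ge[OF B cell_sub[of i N]] by simp
  next
    case False
    then have ij: "i \<le> j" using Suc.prems by simp
    let ?g = "real (Suc j) / real N"
    have g1: "?g \<in> cell N j" "?g \<in> cell N (Suc j)" unfolding cell_def using N by (auto simp: divide_simps)
    have "norm (h a - h ?g) \<le> (\<Sum>l\<in>{i..j}. osc h (cell N l))"
      using Suc.IH[OF ij _ Suc.prems(3) g1(1)] Suc.prems by simp
    moreover have "norm (h ?g - h b) \<le> osc h (cell N (Suc j))"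
      using osc_ge[OF B cell_sub[of "Suc j" N]] Suc.prems g1 by simp
    moreover have "norm (h a - h b) \<le> norm (h a - h ?g) + norm (h ?g - h b)"
      using norm_triangle_ineq[of "h a - h ?g" "h ?g - h b"] by simp
    ultimately show ?thesis using ij by (simp add: sum.cl_ivl_Suc)
  qed
qed

definition win :: "(real \<Rightarrow> real^'d) \<Rightarrow> nat \<Rightarrow> nat \<Rightarrow> nat \<Rightarrow> real" where
  "win h N M k = (\<Sum>l\<in>{k - M..k + M} \<inter> {..<N}. osc h (cell N l))"

lemma win_ge:
  fixes h :: "real \<Rightarrow> real^'d"
  assumes B: "\<forall>t\<in>{0..1}. norm (h t) \<le> B" and N: "N > 0"
    and ik: "i < N" "k < N" "i \<le> k + M" "k \<le> i + M"
  shows "(\<Sum>l\<in>{min i k..max i k}. osc h (cell N l)) \<le> win h N M k"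
  unfolding win_def
proof (rule sum_mono2)
  show "finite ({k - M..k + M} \<inter> {..<N})" by simp
  show "{min i k..max i k} \<subseteq> {k - M..k + M} \<inter> {..<N}" using ik by auto
  fix l assume "l \<in> {k - M..k + M} \<inter> {..<N} - {min i k..max i k}"
  then have "l < N" by simp
  then show "0 \<le> osc h (cell N l)" using osc_nonneg[OF B cell_sub cell_ne[OF N]] by blast
qed

lemma near_bound:
  fixes h :: "real \<Rightarrow> real^'d"
  assumes B: "\<forall>t\<in>{0..1}. norm (h t) \<le> B" and N: "N > 0"
    and M: "real M \<ge> r * real N + 2"
    and k: "k < N" "t \<in> cell N k" and s: "s \<in> {0..1}" "\<bar>s - t\<bar> < r + 1 / real N"
  shows "norm (h s - h t) \<le> win h N M k"
proof -
  define c where "c = cidx N s"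
  have c: "c < N" "s \<in> cell N c" using cidx[OF N s(1)] unfolding c_def by auto
  have c1: "real c \<le> s * real N" "s * real N \<le> real c + 1" using c(2) N unfolding cell_def by (auto simp: divide_simps)
  have k1: "real k \<le> t * real N" "t * real N \<le> real k + 1" using k(2) N unfolding cell_def by (auto simp: divide_simps)
  have "\<bar>s - t\<bar> * real N < (r + 1 / real N) * real N" using s(2) N by (simp add: mult_strict_right_mono)
  also have "(r + 1 / real N) * real N = r * real N + 1" using N by (simp add: field_simps)
  also have "\<bar>s - t\<bar> * real N = \<bar>s * real N - t * real N\<bar>" by (simp add: abs_mult left_diff_distrib[symmetric])
  finally have d: "\<bar>s * real N - t * real N\<bar> < r * real N + 1" .
  have "real c < real k + real M" using c1 k1 d M by linarith
  then have ck: "c \<le> k + M" by linarith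
  have "real k < real c + real M" using c1 k1 d M by linarith
  then have kc: "k \<le> c + M" by linarith
  have "norm (h s - h t) \<le> (\<Sum>l\<in>{min c k..max c k}. osc h (cell N l))"
  proof (cases "c \<le> k")
    case True
    then show ?thesis using chain[OF B N True k(1) c(2) k(2)] by (simp add: min_def max_def)
  next
    case False
    then have kc': "k \<le> c" by simp
    show ?thesis using chain[OF B N kc' c(1) k(2) c(2)] False by (simp add: min_def max_def norm_minus_commute)
  qed
  also have "\<dots> \<le> win h N M k" by (rule win_ge[OF B N c(1) k(1) ck kc])
  finally show ?thesis .
qed



lemma seg_bound:
  fixes A C x y :: "real^'d"
  assumes "x \<in> closed_segment A C" "norm (A - y) \<le> R" "norm (C - y) \<le> R"
  shows "norm (x - y) \<le> R"
proof -
  have "A \<in> cball y R" "C \<in> cball y R" using assms(2,3) by (auto simp: dist_norm norm_minus_commute)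
  then have "closed_segment A C \<subseteq> cball y R" by (intro closed_segment_subset) auto
  then show ?thesis using assms(1) by (auto simp: dist_norm norm_minus_commute)
qed

lemma lefts_bound:
  fixes h :: "real \<Rightarrow> real^'d"
  assumes cad: "cadlag h" and B: "\<forall>t\<in>{0..1}. norm (h t) \<le> B" and N: "N > 0"
    and M: "real M \<ge> r * real N + 2"
    and k: "k < N" "t \<in> cell N k" and t': "t' \<in> {0<..1}" "\<bar>t' - t\<bar> < r"
  shows "norm (Lim (at_left t') h - h t) \<le> win h N M k"
proof -
  obtain l where l: "(h \<longlongrightarrow> l) (at_left t')" using cad t' unfolding cadlag_def by blast
  have nt: "\<not> trivial_limit (at_left t')" by (simp add: trivial_limit_at_left_real)
  have Ll: "Lim (at_left t') h = l" by (rule tendsto_Lim[OF nt l])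
  have "((\<lambda>s. h s - h t) \<longlongrightarrow> l - h t) (at_left t')" by (intro tendsto_intros l)
  moreover have "eventually (\<lambda>s. norm (h s - h t) \<le> win h N M k) (at_left t')"
    unfolding eventually_at_left_field
  proof (intro exI conjI allI impI)
    show "max 0 (t' - 1 / real N) < t'" using t' N by simp
    fix y assume y: "max 0 (t' - 1 / real N) < y" "y < t'"
    have "y \<in> {0..1}" using y t' by simp
    moreover have "\<bar>y - t\<bar> < r + 1 / real N"
    proof -
      have "0 < 1 / real N" using N by simp
      then show ?thesis using y t' unfolding abs_less_iff max_less_iff_conj greaterThanAtMost_iff by linarith
    qed
    ultimately show "norm (h y - h t) \<le> win h N M k" by (rule near_bound[OF B N M k])
  qed
  ultimately have "norm (l - h t) \<le> win h N M k" by (rule Lim_norm_ubound[OF nt])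
  then show ?thesis using Ll by simp
qed

lemma pw_bound:
  fixes h :: "real \<Rightarrow> real^'d"
  assumes cad: "cadlag h" and B: "\<forall>t\<in>{0..1}. norm (h t) \<le> B" and N: "N > 0"
    and M: "real M \<ge> r * real N + 2" and r: "r > 0"
    and k: "k < N" "t \<in> cell N k" and t': "t' \<in> {0..1}" "\<bar>t' - t\<bar> < r"
    and x: "x \<in> closed_segment (lefts h t') (h t')"
  shows "norm (x - h t) \<le> win h N M k"
proof -
  have ht': "norm (h t' - h t) \<le> win h N M k"
  proof -
    have "0 < 1 / real N" using N by simp
    then have "\<bar>t' - t\<bar> < r + 1 / real N" using t'(2) by linarith
    then show ?thesis using near_bound[OF B N M k t'(1)] by simp
  qed
  have "norm (lefts h t' - h t) \<le> win h N M k"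
  proof (cases "t' = 0")
    case True then show ?thesis using ht' by (simp add: lefts_def)
  next
    case False
    then have "t' \<in> {0<..1}" using t' by simp
    then show ?thesis using lefts_bound[OF cad B N M k _ t'(2)] False by (simp add: lefts_def)
  qed
  then show ?thesis using seg_bound[OF x _ ht'] by simp
qed

lemma pw_bound0:
  fixes h :: "real \<Rightarrow> real^'d"
  assumes B: "\<forall>t\<in>{0..1}. norm (h t) \<le> B" and N: "N > 0"
    and M: "real M \<ge> r * real N + 2" and r: "r > 0"
    and k: "k < N" "t \<in> cell N k" and t: "t < r"
    and x: "x \<in> closed_segment 0 (h 0)"
  shows "norm (x - h t) \<le> norm (h 0) + win h N M k \<and> k \<le> M"
proof -
  have tt: "t \<in> {0..1}" using cell_sub[OF k(1)] k(2) by blast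
  have ht': "norm (h 0 - h t) \<le> win h N M k"
  proof -
    have "0 < 1 / real N" using N by simp
    then have "\<bar>0 - t\<bar> < r + 1 / real N" using tt t unfolding abs_less_iff atLeastAtMost_iff by linarith
    then show ?thesis using near_bound[OF B N M k, of 0] by simp
  qed
  have "norm (0 - h t) \<le> norm (h 0) + norm (h 0 - h t)"
    using norm_triangle_ineq[of "h 0" "h t - h 0"] by (simp add: norm_minus_commute)
  then have "norm (0 - h t) \<le> norm (h 0) + win h N M k" using ht' by simp
  moreover have "norm (h 0 - h t) \<le> norm (h 0) + win h N M k" using ht' norm_ge_zero[of "h 0"] by linarith
  ultimately have "norm (x - h t) \<le> norm (h 0) + win h N M k" by (rule seg_bound[OF x])
  moreover have "k \<le> M"
  proof -
    have "real k / real N \<le> t" using k(2) unfolding cell_def by simp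
    then have "real k \<le> t * real N" using N by (simp add: divide_simps)
    also have "\<dots> < r * real N" using t N by simp
    finally show ?thesis using M by linarith
  qed
  ultimately show ?thesis by simp
qed



lemma win_sum:
  fixes h :: "real \<Rightarrow> real^'d"
  assumes B: "\<forall>t\<in>{0..1}. norm (h t) \<le> B" and N: "N > 0"
  shows "(\<Sum>k<N. win h N M k) \<le> real (2 * M + 1) * (\<Sum>l<N. osc h (cell N l))"
proof -
  let ?e = "\<lambda>l. osc h (cell N l)"
  let ?P = "\<lambda>k l. k - M \<le> l \<and> l \<le> k + M"
  have e0: "\<And>l. l < N \<Longrightarrow> 0 \<le> ?e l" using osc_nonneg[OF B cell_sub cell_ne[OF N]] by blast
  have "(\<Sum>k<N. win h N M k) = (\<Sum>k<N. \<Sum>l<N. if ?P k l then ?e l else 0)"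
  proof (rule sum.cong[OF refl])
    fix k
    have "win h N M k = (\<Sum>l\<in>{..<N} \<inter> {k - M..k + M}. ?e l)" unfolding win_def by (simp add: Int_commute)
    also have "\<dots> = (\<Sum>l<N. if l \<in> {k - M..k + M} then ?e l else 0)"
      by (rule sum.inter_restrict) simp
    finally show "win h N M k = (\<Sum>l<N. if ?P k l then ?e l else 0)" by simp
  qed
  also have "\<dots> = (\<Sum>l<N. \<Sum>k<N. if ?P k l then ?e l else 0)" by (rule sum.swap)
  also have "\<dots> \<le> (\<Sum>l<N. real (2 * M + 1) * ?e l)"
  proof (rule sum_mono)
    fix l assume l: "l \<in> {..<N}"
    have "(\<Sum>k<N. if ?P k l then ?e l else 0) = (\<Sum>k\<in>{..<N} \<inter> {k. ?P k l}. ?e l)"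
      by (subst sum.inter_restrict) auto
    also have "\<dots> = real (card {k\<in>{..<N}. ?P k l}) * ?e l"
    proof -
      have "{..<N} \<inter> {k. ?P k l} = {k\<in>{..<N}. ?P k l}" by auto
      then show ?thesis by simp
    qed
    also have "\<dots> \<le> real (2 * M + 1) * ?e l"
    proof (rule mult_right_mono)
      have "{k\<in>{..<N}. ?P k l} \<subseteq> {l - M..l + M}" by auto
      then have "card {k\<in>{..<N}. ?P k l} \<le> card {l - M..l + M}" by (intro card_mono) auto
      also have "\<dots> \<le> 2 * M + 1" by simp
      finally show "real (card {k\<in>{..<N}. ?P k l}) \<le> real (2 * M + 1)" by linarith
      show "0 \<le> ?e l" using e0 l by simp
    qed
    finally show "(\<Sum>k<N. if ?P k l then ?e l else 0) \<le> real (2 * M + 1) * ?e l" .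
  qed
  also have "\<dots> = real (2 * M + 1) * (\<Sum>l<N. ?e l)" by (simp add: sum_distrib_left)
  finally show ?thesis .
qed

lemma int_bound:
  fixes f :: "real \<Rightarrow> real"
  assumes f: "f integrable_on {0..1}" and N: "N > 0"
    and Bk: "\<And>k t. k < N \<Longrightarrow> t \<in> cell N k \<Longrightarrow> f t \<le> Bk k"
  shows "integral {0..1} f \<le> (\<Sum>k<N. Bk k) / real N"
proof -
  have "n \<le> N \<Longrightarrow> integral {0..real n / real N} f \<le> (\<Sum>k<n. Bk k) / real N" for n
  proof (induction n)
    case 0 then show ?case by simp
  next
    case (Suc n)
    let ?a = "real n / real N" and ?b = "real (Suc n) / real N"
    have ab: "0 \<le> ?a" "?a \<le> ?b" "?b \<le> 1" using Suc.prems N by (auto simp: divide_simps)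
    have fi: "f integrable_on {0..?b}" by (rule integrable_subinterval_real[OF f]) (use ab in auto)
    have "integral {0..?a} f + integral {?a..?b} f = integral {0..?b} f"
      by (rule Henstock_Kurzweil_Integration.integral_combine[OF ab(1,2) fi])
    moreover have "integral {?a..?b} f \<le> Bk n / real N"
    proof -
      have "integral {?a..?b} f \<le> integral {?a..?b} (\<lambda>_. Bk n)"
      proof (rule integral_le)
        show "f integrable_on {?a..?b}" by (rule integrable_subinterval_real[OF f]) (use ab in auto)
        show "(\<lambda>_. Bk n) integrable_on {?a..?b}" by (rule integrable_const_ivl)
        fix x assume "x \<in> {?a..?b}"
        then show "f x \<le> Bk n" using Bk[of n x] Suc.prems unfolding cell_def by simp
      qed
      also have "\<dots> = Bk n / real N" using ab N by (simp add: divide_simps algebra_simps)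
      finally show ?thesis .
    qed
    ultimately show ?case using Suc by (simp add: add_divide_distrib)
  qed
  from this[of N] show ?thesis using N by simp
qed



lemma main_bound:
  fixes g h :: "real \<Rightarrow> real^'d"
  assumes BV: "BV h" and r: "r > 0" and z: "z \<ge> 0"
    and H: "\<forall>t\<in>{0..1}. \<exists>t' x'. t' \<in> {0..1} \<and> \<bar>t' - t\<bar> < r \<and> norm (g t - x') < r \<and>
          (x' \<in> closed_segment (lefts h t') (h t') \<or> (t' = 0 \<and> x' \<in> closed_segment 0 (h 0) \<and> z = norm (h 0)))"
  shows "integral {0..1} (\<lambda>t. norm (g t - h t)) \<le> 2 * (Var h - norm (h 0) + z + 1) * r"
proof -
  have cad: "cadlag h" using BV unfolding BV_def by simp
  obtain B where B: "\<forall>t\<in>{0..1}. norm (h t) \<le> B" using cadlag_bounded[OF cad] by blast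
  define V' where "V' = Var h - norm (h 0)"
  have "0 \<le> (\<Sum>l<1. osc h (cell 1 l))" using osc_nonneg[OF B cell_sub[of 0 1] cell_ne[of 1 0]] by simp
  then have V'0: "0 \<le> V'" using VarE[OF BV, of 1] unfolding V'_def by simp
  let ?f = "\<lambda>t. norm (g t - h t)"
  show ?thesis
  proof (cases "?f integrable_on {0..1}")
    case False
    then have "integral {0..1} ?f = 0" by (simp add: not_integrable_integral)
    moreover have "0 \<le> 2 * (Var h - norm (h 0) + z + 1) * r" using V'0 z r unfolding V'_def by simp
    ultimately show ?thesis by simp
  next
    case True
    define N where "N = nat \<lceil>(7 * V' + 4 * z) / r\<rceil> + 1"
    have N: "N > 0" unfolding N_def by simp
    have "(7 * V' + 4 * z) / r \<le> real N" unfolding N_def by linarith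
    then have NN: "7 * V' + 4 * z \<le> r * real N" using r by (simp add: divide_simps mult.commute)
    define M where "M = nat \<lceil>r * real N\<rceil> + 2"
    have M1: "real M \<ge> r * real N + 2" unfolding M_def by linarith
    have rN0: "0 \<le> r * real N" using r by simp
    have M2: "real M \<le> r * real N + 3" unfolding M_def using rN0 by linarith
    define E where "E = (\<Sum>l<N. osc h (cell N l))"
    have E0: "0 \<le> E" unfolding E_def using osc_nonneg[OF B cell_sub cell_ne[OF N]] by (intro sum_nonneg) blast
    have EV: "E \<le> V'" unfolding E_def V'_def by (rule VarE[OF BV N])
    define Bk where "Bk = (\<lambda>k. r + win h N M k + (if k \<le> M then z else 0))"
    have fb: "?f t \<le> Bk k" if k: "k < N" "t \<in> cell N k" for k t
    proof -
      have t01: "t \<in> {0..1}" using cell_sub[OF k(1)] k(2) by blast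
      obtain t' x' where tx: "t' \<in> {0..1}" "\<bar>t' - t\<bar> < r" "norm (g t - x') < r"
        "x' \<in> closed_segment (lefts h t') (h t') \<or> (t' = 0 \<and> x' \<in> closed_segment 0 (h 0) \<and> z = norm (h 0))"
        using H t01 by blast
      have tri: "?f t \<le> norm (g t - x') + norm (x' - h t)"
        using norm_triangle_ineq[of "g t - x'" "x' - h t"] by simp
      show ?thesis
        using tx(4)
      proof
        assume x: "x' \<in> closed_segment (lefts h t') (h t')"
        have "norm (x' - h t) \<le> win h N M k" by (rule pw_bound[OF cad B N M1 r k tx(1,2) x])
        moreover have "0 \<le> (if k \<le> M then z else 0)" using z by simp
        ultimately show ?thesis using tri tx(3) unfolding Bk_def by linarith
      next
        assume x: "t' = 0 \<and> x' \<in> closed_segment 0 (h 0) \<and> z = norm (h 0)"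
        have "t < r" using tx(2) x by simp
        then have "norm (x' - h t) \<le> norm (h 0) + win h N M k \<and> k \<le> M"
          using pw_bound0[OF B N M1 r k] x by blast
        then show ?thesis using tri tx(3) x unfolding Bk_def by auto
      qed
    qed
    have I: "integral {0..1} ?f \<le> (\<Sum>k<N. Bk k) / real N"
      by (rule int_bound[OF True N fb])
    have "(\<Sum>k<N. Bk k) = real N * r + (\<Sum>k<N. win h N M k) + (\<Sum>k<N. if k \<le> M then z else 0)"
      unfolding Bk_def by (simp add: sum.distrib)
    also have "(\<Sum>k<N. if k \<le> M then z else 0) \<le> real (M + 1) * z"
    proof -
      have "(\<Sum>k<N. if k \<le> M then z else 0) = (\<Sum>k\<in>{..<N} \<inter> {..M}. z)"
        by (subst sum.inter_restrict) auto
      also have "\<dots> = real (card ({..<N} \<inter> {..M})) * z" by simp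
      also have "\<dots> \<le> real (M + 1) * z"
      proof (rule mult_right_mono[OF _ z])
        have "card ({..<N} \<inter> {..M}) \<le> card {..M}" by (intro card_mono) auto
        then show "real (card ({..<N} \<inter> {..M})) \<le> real (M + 1)" by simp
      qed
      finally show ?thesis .
    qed
    also have "(\<Sum>k<N. win h N M k) \<le> real (2 * M + 1) * E" unfolding E_def by (rule win_sum[OF B N])
    finally have S: "(\<Sum>k<N. Bk k) \<le> real N * r + real (2 * M + 1) * E + real (M + 1) * z" by simp
    have "real (2 * M + 1) * E \<le> (2 * (r * real N) + 7) * V'"
    proof -
      have "real (2 * M + 1) * E \<le> real (2 * M + 1) * V'" using EV by (intro mult_left_mono) auto
      also have "\<dots> \<le> (2 * (r * real N) + 7) * V'" using M2 V'0 by (intro mult_right_mono) auto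
      finally show ?thesis .
    qed
    moreover have "real (M + 1) * z \<le> (r * real N + 4) * z" using M2 z by (intro mult_right_mono) auto
    ultimately have "(\<Sum>k<N. Bk k) \<le> real N * r + (2 * (r * real N) + 7) * V' + (r * real N + 4) * z"
      using S by linarith
    also have "\<dots> \<le> real N * (2 * (V' + z + 1) * r)"
      using NN z r V'0 by (simp add: algebra_simps) (smt (verit) mult_nonneg_nonneg of_nat_0_le_iff)
    finally have "(\<Sum>k<N. Bk k) / real N \<le> 2 * (V' + z + 1) * r" using N by (simp add: divide_simps mult.commute)
    then show ?thesis using I unfolding V'_def by linarith
  qed
qed



lemma haus_ge:
  fixes S T :: "'a::metric_space set"
  assumes "p \<in> S" "bdd_above ((\<lambda>x. infdist x T) ` S)"
  shows "infdist p T \<le> hausdist S T"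
proof -
  have "infdist p T \<le> (SUP x\<in>S. infdist x T)" by (rule cSUP_upper[OF assms])
  then show ?thesis unfolding hausdist_def by simp
qed

lemma infdist_lt_ex:
  fixes T :: "'a::metric_space set"
  assumes "T \<noteq> {}" "infdist p T < r"
  shows "\<exists>q\<in>T. dist p q < r"
proof -
  have "(INF a\<in>T. dist p a) < r" using assms by (simp add: infdist_notempty)
  moreover have "bdd_below ((\<lambda>a. dist p a) ` T)" by (rule bdd_belowI2[of _ 0]) simp
  ultimately show ?thesis using cINF_less_iff[OF assms(1)] by blast
qed

lemma cadlag_lefts_bound:
  fixes g :: "real \<Rightarrow> real^'d"
  assumes cad: "cadlag g" and B: "\<forall>t\<in>{0..1}. norm (g t) \<le> B" and t: "t \<in> {0<..1}"
  shows "norm (Lim (at_left t) g) \<le> B"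
proof -
  obtain l where l: "(g \<longlongrightarrow> l) (at_left t)" using cad t unfolding cadlag_def by blast
  have nt: "\<not> trivial_limit (at_left t)" by (simp add: trivial_limit_at_left_real)
  have "eventually (\<lambda>s. norm (g s) \<le> B) (at_left t)"
    unfolding eventually_at_left_field
    by (rule exI[of _ 0]) (use t B in auto)
  then have "norm l \<le> B" by (rule Lim_norm_ubound[OF nt l])
  then show ?thesis using tendsto_Lim[OF nt l] by simp
qed

lemma graph_bdd:
  fixes G H :: "(real \<times> (real^'d)) set"
  assumes G: "\<forall>p\<in>G. fst p \<in> {0..1} \<and> norm (snd p) \<le> B" and ne: "q \<in> H"
  shows "bdd_above ((\<lambda>x. infdist x H) ` G)"
proof (rule bdd_aboveI2)
  fix p assume p: "p \<in> G"
  have "infdist p H \<le> dist p q" by (rule infdist_le[OF ne])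
  also have "\<dots> \<le> norm p + norm q" by (simp add: dist_norm norm_triangle_ineq4)
  also have "norm p \<le> norm (fst p) + norm (snd p)" using norm_Pair_le[of "fst p" "snd p"] by simp
  finally show "infdist p H \<le> 1 + B + norm q" using G p by auto
qed

lemma limit_arg:
  fixes I c \<rho> :: real
  assumes "c > 0" "\<And>r. r > \<rho> \<Longrightarrow> I \<le> c * r"
  shows "I \<le> c * \<rho>"
proof (rule ccontr)
  assume "\<not> I \<le> c * \<rho>"
  then have "\<rho> < I / c" using assms(1) by (simp add: divide_simps mult.commute)
  then have "(I / c + \<rho>) / 2 > \<rho>" by simp
  then have "I \<le> c * ((I / c + \<rho>) / 2)" by (rule assms(2))
  also have "\<dots> = (I + c * \<rho>) / 2" using assms(1) by (simp add: field_simps)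
  finally show False using \<open>\<not> I \<le> c * \<rho>\<close> by simp
qed

lemma Var_ge_h0:
  fixes h :: "real \<Rightarrow> real^'d"
  assumes BV: "BV h"
  shows "norm (h 0) \<le> Var h"
proof -
  have cad: "cadlag h" using BV unfolding BV_def by simp
  obtain B where B: "\<forall>t\<in>{0..1}. norm (h t) \<le> B" using cadlag_bounded[OF cad] by blast
  have "0 \<le> (\<Sum>l<1. osc h (cell 1 l))" using osc_nonneg[OF B cell_sub[of 0 1] cell_ne[of 1 0]] by simp
  then show ?thesis using VarE[OF BV, of 1] by simp
qed

theorem lemma4p3:
  fixes g h :: "real \<Rightarrow> real^'d"
  assumes "BV h" and "cadlag g"
  shows "(integral {0..1} (\<lambda>s. norm (g s - h s))
           \<le> 2 * real CARD('d) * (Var h - norm (h 0) + 1) * rho2 g h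
             + pi * real CARD('d) * (rho2 g h)\<^sup>2)
         \<and> (integral {0..1} (\<lambda>s. norm (g s - h s))
           \<le> 2 * real CARD('d) * (Var h + 1) * rho2' g h
             + pi * real CARD('d) * (rho2' g h)\<^sup>2)"
proof -
  note BV = assms(1)
  obtain B where B: "\<forall>t\<in>{0..1}. norm (g t) \<le> B" using cadlag_bounded[OF assms(2)] by blast
  have V0: "norm (h 0) \<le> Var h" by (rule Var_ge_h0[OF BV])
  let ?I = "integral {0..1} (\<lambda>s. norm (g s - h s))"
  have d1: "1 \<le> real CARD('d)" by simp
  have lb: "norm (lefts g t) \<le> B" "norm (lefts' g t) \<le> B" if "t \<in> {0..1}" for t
  proof -
    have "norm (lefts g t) \<le> B \<and> norm (lefts' g t) \<le> B"
    proof (cases "t = 0")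
      case True
      then show ?thesis using B that by (simp add: lefts_def lefts'_def) (metis atLeastAtMost_iff norm_ge_zero order_trans zero_le_one order.refl)
    next
      case False
      then have "t \<in> {0<..1}" using that by simp
      then show ?thesis using cadlag_lefts_bound[OF assms(2) B] False by (simp add: lefts_def lefts'_def)
    qed
    then show "norm (lefts g t) \<le> B" "norm (lefts' g t) \<le> B" by auto
  qed
  have segB: "norm x \<le> B" if "x \<in> closed_segment a b" "norm a \<le> B" "norm b \<le> B" for x a b :: "real^'d"
    using seg_bound[OF that(1), of 0 B] that by simp
  have Gg: "\<forall>p\<in>cgraph g. fst p \<in> {0..1} \<and> norm (snd p) \<le> B"
    unfolding cgraph_def using segB lb(1) B by auto
  have Gg': "\<forall>p\<in>cgraph' g. fst p \<in> {0..1} \<and> norm (snd p) \<le> B"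
    unfolding cgraph'_def using segB lb(2) B by auto
  have h0: "(0, h 0) \<in> cgraph h" "(0, h 0) \<in> cgraph' h" unfolding cgraph_def cgraph'_def by auto
  have Gh: "\<forall>p\<in>cgraph h. fst p \<in> {0..1}" unfolding cgraph_def by auto
  have Gh': "\<forall>p\<in>cgraph' h. fst p \<in> {0..1}" unfolding cgraph'_def by auto
  have bdd: "bdd_above ((\<lambda>x. infdist x (cgraph h)) ` cgraph g)" by (rule graph_bdd[OF Gg h0(1)])
  have bdd': "bdd_above ((\<lambda>x. infdist x (cgraph' h)) ` cgraph' g)" by (rule graph_bdd[OF Gg' h0(2)])
  have gin: "(t, g t) \<in> cgraph g" "(t, g t) \<in> cgraph' g" if "t \<in> {0..1}" for t
    unfolding cgraph_def cgraph'_def using that by auto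
  have rho: "infdist (t, g t) (cgraph h) \<le> rho2 g h" if "t \<in> {0..1}" for t
    unfolding rho2_def by (rule haus_ge[OF gin(1)[OF that] bdd])
  have rho': "infdist (t, g t) (cgraph' h) \<le> rho2' g h" if "t \<in> {0..1}" for t
    unfolding rho2'_def by (rule haus_ge[OF gin(2)[OF that] bdd'])
  have r0: "0 \<le> rho2 g h" using rho[of 0] infdist_nonneg[of "(0, g 0)" "cgraph h"] by simp
  have r0': "0 \<le> rho2' g h" using rho'[of 0] infdist_nonneg[of "(0, g 0)" "cgraph' h"] by simp
  have ex: "\<exists>t' x'. t' \<in> {0..1} \<and> \<bar>t' - t\<bar> < r \<and> norm (g t - x') < r \<and> (t', x') \<in> G"
    if exne: "G \<noteq> {}" "infdist (t, g t) G < r" and Gf: "\<forall>p\<in>G. fst p \<in> {0..1}" for G t r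
  proof -
    obtain q where q: "q \<in> G" "dist (t, g t) q < r" using infdist_lt_ex[OF exne] by blast
    have "dist t (fst q) < r" using dist_fst_le[of "(t, g t)" q] q by simp
    moreover have "dist (g t) (snd q) < r" using dist_snd_le[of "(t, g t)" q] q by simp
    ultimately show ?thesis using q Gf
      by (intro exI[of _ "fst q"] exI[of _ "snd q"]) (auto simp: dist_real_def dist_norm abs_minus_commute)
  qed
  have part1: "?I \<le> 2 * (Var h - norm (h 0) + 0 + 1) * rho2 g h"
  proof (rule limit_arg)
    show "0 < 2 * (Var h - norm (h 0) + 0 + 1)" using V0 by simp
    fix r assume r: "rho2 g h < r"
    show "?I \<le> 2 * (Var h - norm (h 0) + 0 + 1) * r"
    proof (rule main_bound[OF BV _ order.refl])
      show "0 < r" using r r0 by simp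
      show "\<forall>t\<in>{0..1}. \<exists>t' x'. t' \<in> {0..1} \<and> \<bar>t' - t\<bar> < r \<and> norm (g t - x') < r \<and>
          (x' \<in> closed_segment (lefts h t') (h t') \<or> (t' = 0 \<and> x' \<in> closed_segment 0 (h 0) \<and> 0 = norm (h 0)))"
      proof
        fix t :: real assume t: "t \<in> {0..1}"
        have "infdist (t, g t) (cgraph h) < r" using rho[OF t] r by simp
        then obtain t' x' where "t' \<in> {0..1}" "\<bar>t' - t\<bar> < r" "norm (g t - x') < r" "(t', x') \<in> cgraph h"
          using ex[of "cgraph h"] h0 Gh by blast
        then show "\<exists>t' x'. t' \<in> {0..1} \<and> \<bar>t' - t\<bar> < r \<and> norm (g t - x') < r \<and>
          (x' \<in> closed_segment (lefts h t') (h t') \<or> (t' = 0 \<and> x' \<in> closed_segment 0 (h 0) \<and> 0 = norm (h 0)))"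
          unfolding cgraph_def by blast
      qed
    qed
  qed
  have part2: "?I \<le> 2 * (Var h - norm (h 0) + norm (h 0) + 1) * rho2' g h"
  proof (rule limit_arg)
    have "0 \<le> Var h" using V0 norm_ge_zero order_trans by blast
    then show "0 < 2 * (Var h - norm (h 0) + norm (h 0) + 1)" by simp
    fix r assume r: "rho2' g h < r"
    show "?I \<le> 2 * (Var h - norm (h 0) + norm (h 0) + 1) * r"
    proof (rule main_bound[OF BV _ norm_ge_zero])
      show "0 < r" using r r0' by simp
      show "\<forall>t\<in>{0..1}. \<exists>t' x'. t' \<in> {0..1} \<and> \<bar>t' - t\<bar> < r \<and> norm (g t - x') < r \<and>
          (x' \<in> closed_segment (lefts h t') (h t') \<or> (t' = 0 \<and> x' \<in> closed_segment 0 (h 0) \<and> norm (h 0) = norm (h 0)))"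
      proof
        fix t :: real assume t: "t \<in> {0..1}"
        have "infdist (t, g t) (cgraph' h) < r" using rho'[OF t] r by simp
        then obtain t' x' where tx: "t' \<in> {0..1}" "\<bar>t' - t\<bar> < r" "norm (g t - x') < r" "(t', x') \<in> cgraph' h"
          using ex[of "cgraph' h"] h0 Gh' by blast
        have "x' \<in> closed_segment (lefts h t') (h t') \<or> (t' = 0 \<and> x' \<in> closed_segment 0 (h 0))"
        proof (cases "t' = 0")
          case True then show ?thesis using tx(4) unfolding cgraph'_def lefts'_def by simp
        next
          case False then show ?thesis using tx(4) unfolding cgraph'_def lefts'_def lefts_def by simp
        qed
        then show "\<exists>t' x'. t' \<in> {0..1} \<and> \<bar>t' - t\<bar> < r \<and> norm (g t - x') < r \<and>
          (x' \<in> closed_segment (lefts h t') (h t') \<or> (t' = 0 \<and> x' \<in> closed_segment 0 (h 0) \<and> norm (h 0) = norm (h 0)))"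
          using tx by blast
      qed
    qed
  qed
  let ?d = "real CARD('d)"
  have c1: "0 \<le> (Var h - norm (h 0) + 1) * rho2 g h" using V0 r0 by simp
  have Vp: "0 \<le> Var h" using V0 norm_ge_zero order_trans by blast
  have c2: "0 \<le> (Var h + 1) * rho2' g h" using Vp r0' by simp
  have a1: "2 * ((Var h - norm (h 0) + 1) * rho2 g h) \<le> 2 * (?d * ((Var h - norm (h 0) + 1) * rho2 g h))"
    using mult_right_mono[OF d1 c1] by linarith
  have a2: "2 * ((Var h + 1) * rho2' g h) \<le> 2 * (?d * ((Var h + 1) * rho2' g h))"
    using mult_right_mono[OF d1 c2] by linarith
  have p1: "0 \<le> pi * ?d * (rho2 g h)\<^sup>2" by simp
  have p2: "0 \<le> pi * ?d * (rho2' g h)\<^sup>2" by simp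
  have q1: "?I \<le> 2 * ((Var h - norm (h 0) + 1) * rho2 g h)" using part1 by (simp add: algebra_simps)
  have q2: "?I \<le> 2 * ((Var h + 1) * rho2' g h)" using part2 by (simp add: algebra_simps)
  have e1: "2 * ?d * (Var h - norm (h 0) + 1) * rho2 g h = 2 * (?d * ((Var h - norm (h 0) + 1) * rho2 g h))"
    by (simp only: mult.assoc)
  have e2: "2 * ?d * (Var h + 1) * rho2' g h = 2 * (?d * ((Var h + 1) * rho2' g h))"
    by (simp only: mult.assoc)
  show ?thesis unfolding e1 e2 using a1 a2 p1 p2 q1 q2 by linarith
qed


end
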